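(* Let $R\subseteq T$ be an integral extension of rings. Suppose that for every maximal ideal $Q$ of $T$ there is a maximal subring $V$ of $T$, integrally closed in $T$, with $(V:T)=Q$. Then for every maximal ideal $P$ of $R$ there is a maximal subring $W$ of $R$, integrally closed in $R$, with $(W:R)=P$.
   Context: All rings are commutative with $1\neq0$ and subrings are unital. A maximal subring of a ring $A$ is a proper subring maximal with respect to inclusion among proper subrings. The conductor of $S\subseteq A$ is $(S:A)=\{x\in A\mid Ax\subseteq S\}$. *)

theory Defs
  imports Main
begin

text \<open>Rings are subsets of an ambient commutative ring type (with 0 \<noteq> 1);
a ring here is a (unital) subring of the ambient type.\<close>

definition is_subring :: "'a::comm_ring_1 set \<Rightarrow> bool" where
  "is_subring S \<longleftrightarrow> 1 \<in> S \<and> (\<forall>x\<in>S. \<forall>y\<in>S. x + y \<in> S \<and> x * y \<in> S) \<and> (\<forall>x\<in>S. - x \<in> S)"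

definition maximal_subring :: "'a::comm_ring_1 set \<Rightarrow> 'a set \<Rightarrow> bool" where
  "maximal_subring W A \<longleftrightarrow> is_subring W \<and> W \<subset> A \<and>
     (\<forall>S. is_subring S \<and> W \<subseteq> S \<and> S \<subset> A \<longrightarrow> S = W)"

definition integral_over :: "'a::comm_ring_1 set \<Rightarrow> 'a \<Rightarrow> bool" where
  "integral_over S x \<longleftrightarrow>
     (\<exists>n::nat. \<exists>c::nat \<Rightarrow> 'a. (\<forall>i<n. c i \<in> S) \<and> x ^ n + (\<Sum>i<n. c i * x ^ i) = 0)"

definition integrally_closed_in :: "'a::comm_ring_1 set \<Rightarrow> 'a set \<Rightarrow> bool" where
  "integrally_closed_in W A \<longleftrightarrow> (\<forall>x\<in>A. integral_over W x \<longrightarrow> x \<in> W)"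

definition integral_extension :: "'a::comm_ring_1 set \<Rightarrow> 'a set \<Rightarrow> bool" where
  "integral_extension R T \<longleftrightarrow> is_subring R \<and> is_subring T \<and> R \<subseteq> T \<and> (\<forall>x\<in>T. integral_over R x)"

definition conductor :: "'a::comm_ring_1 set \<Rightarrow> 'a set \<Rightarrow> 'a set" where
  "conductor S A = {x \<in> A. \<forall>a\<in>A. a * x \<in> S}"

definition ideal_in :: "'a::comm_ring_1 set \<Rightarrow> 'a set \<Rightarrow> bool" where
  "ideal_in I A \<longleftrightarrow> I \<subseteq> A \<and> 0 \<in> I \<and> (\<forall>x\<in>I. \<forall>y\<in>I. x + y \<in> I) \<and>
     (\<forall>a\<in>A. \<forall>x\<in>I. a * x \<in> I)"

definition maximal_ideal_in :: "'a::comm_ring_1 set \<Rightarrow> 'a set \<Rightarrow> bool" where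
  "maximal_ideal_in P A \<longleftrightarrow> ideal_in P A \<and> P \<noteq> A \<and>
     (\<forall>J. ideal_in J A \<and> P \<subseteq> J \<longrightarrow> J = P \<or> J = A)"

end

theory Submission imports Defs "HOL-Computational_Algebra.Polynomial" begin

lemma sr_0: "is_subring S \<Longrightarrow> 0 \<in> S"
  unfolding is_subring_def by (metis add.right_inverse)
lemma sr_1: "is_subring S \<Longrightarrow> 1 \<in> S" unfolding is_subring_def by blast
lemma sr_add: "is_subring S \<Longrightarrow> x \<in> S \<Longrightarrow> y \<in> S \<Longrightarrow> x + y \<in> S" unfolding is_subring_def by blast
lemma sr_mult: "is_subring S \<Longrightarrow> x \<in> S \<Longrightarrow> y \<in> S \<Longrightarrow> x * y \<in> S" unfolding is_subring_def by blast
lemma sr_neg: "is_subring S \<Longrightarrow> x \<in> S \<Longrightarrow> - x \<in> S" unfolding is_subring_def by blast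
lemma sr_diff: "is_subring S \<Longrightarrow> x \<in> S \<Longrightarrow> y \<in> S \<Longrightarrow> x - y \<in> S"
  by (metis diff_conv_add_uminus sr_add sr_neg)
lemma sr_pow: "is_subring S \<Longrightarrow> x \<in> S \<Longrightarrow> x ^ n \<in> S"
  by (induction n) (auto intro: sr_1 sr_mult)
lemma sr_sum: "is_subring S \<Longrightarrow> (\<And>i. i \<in> A \<Longrightarrow> f i \<in> S) \<Longrightarrow> sum f A \<in> S"
proof (induction A rule: infinite_finite_induct)
  case (infinite A) then show ?case by (simp add: sr_0)
next
  case empty then show ?case by (simp add: sr_0)
next
  case (insert x F) then show ?case by (simp add: sr_add)
qed

lemma max_sr_eq:
  assumes "maximal_subring V T" "is_subring G" "V \<subseteq> G" "G \<subseteq> T" "x \<in> G" "x \<notin> V"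
  shows "G = T"
  using assms unfolding maximal_subring_def by blast

lemma valA:
  fixes V T :: "'a::comm_ring_1 set"
  assumes mx: "maximal_subring V T" and ic: "integrally_closed_in V T"
    and T: "is_subring T"
    and x: "x \<in> T" "x \<notin> V" and y: "y \<in> T" and xy: "x * y \<in> V"
  shows "y \<in> V"
proof -
  have V: "is_subring V" and VT: "V \<subseteq> T"
    using mx unfolding maximal_subring_def by auto
  define D where "D m = {poly p y | p. (\<forall>i. coeff p i \<in> V) \<and> degree p \<le> m}" for m
  have Dadd: "a + b \<in> D m" if ha: "a \<in> D m" and hb: "b \<in> D m" for a b m
  proof -
    obtain p q where p: "\<forall>i. coeff p i \<in> V" "degree p \<le> m" "a = poly p y"
      and q: "\<forall>i. coeff q i \<in> V" "degree q \<le> m" "b = poly q y"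
      using ha hb unfolding D_def by blast
    have "\<forall>i. coeff (p + q) i \<in> V" using p q V by (simp add: sr_add)
    moreover have "degree (p + q) \<le> m" using p q by (simp add: degree_add_le)
    moreover have "a + b = poly (p + q) y" using p q by simp
    ultimately show ?thesis unfolding D_def by blast
  qed
  have Dmult: "a * b \<in> D (m + k)" if ha: "a \<in> D m" and hb: "b \<in> D k" for a b m k
  proof -
    obtain p q where p: "\<forall>i. coeff p i \<in> V" "degree p \<le> m" "a = poly p y"
      and q: "\<forall>i. coeff q i \<in> V" "degree q \<le> k" "b = poly q y"
      using ha hb unfolding D_def by blast
    have "\<forall>i. coeff (p * q) i \<in> V" using p q V
      by (auto simp: coeff_mult intro!: sr_sum sr_mult)
    moreover have "degree (p * q) \<le> m + k" using p q
      by (meson add_mono degree_mult_le order_trans)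
    moreover have "a * b = poly (p * q) y" using p q by simp
    ultimately show ?thesis unfolding D_def by blast
  qed
  have VD: "v \<in> D m" if "v \<in> V" for v m
  proof -
    have "\<forall>i. coeff [:v:] i \<in> V" using that V by (auto simp: coeff_pCons sr_0 split: nat.split)
    then show ?thesis unfolding D_def by (intro CollectI exI[of _ "[:v:]"]) simp
  qed
  have yD: "y ^ k \<in> D k" for k
  proof -
    have "\<forall>i. coeff (monom 1 k) i \<in> V" using V by (simp add: coeff_monom sr_0 sr_1)
    then show ?thesis unfolding D_def
      by (intro CollectI exI[of _ "monom 1 k"]) (simp add: poly_monom degree_monom_le)
  qed
  define G where "G = {z \<in> T. \<exists>m. z * y ^ m \<in> D m}"
  have "is_subring G"
    unfolding is_subring_def
  proof (intro conjI ballI)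
    show "1 \<in> G" unfolding G_def using T VD[of 1 0] V by (auto simp: sr_1 intro!: exI[of _ 0])
  next
    fix a b assume a: "a \<in> G" and b: "b \<in> G"
    then obtain m k where m: "a * y ^ m \<in> D m" and k: "b * y ^ k \<in> D k" and abT: "a \<in> T" "b \<in> T"
      unfolding G_def by blast
    have "(a + b) * y ^ (m + k) = (a * y ^ m) * y ^ k + (b * y ^ k) * y ^ m"
      by (simp add: algebra_simps power_add)
    also have "\<dots> \<in> D (m + k)"
      using Dadd Dmult[OF m yD[of k]] Dmult[OF k yD[of m]] by (simp add: add.commute)
    finally have 1: "(a + b) * y ^ (m + k) \<in> D (m + k)" .
    have "(a * b) * y ^ (m + k) = (a * y ^ m) * (b * y ^ k)"
      by (simp add: algebra_simps power_add)
    also have "\<dots> \<in> D (m + k)" using Dmult[OF m k] .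
    finally have 2: "(a * b) * y ^ (m + k) \<in> D (m + k)" .
    show "a + b \<in> G" "a * b \<in> G" using 1 2 abT T unfolding G_def
      by (auto simp: sr_add sr_mult)
  next
    fix a assume a: "a \<in> G"
    then obtain m where m: "a * y ^ m \<in> D m" and aT: "a \<in> T" unfolding G_def by blast
    have "(-a) * y ^ m = (-1) * (a * y ^ m)" by simp
    also have "\<dots> \<in> D (0 + m)" using Dmult[OF VD[of "-1" 0] m] V by (simp add: sr_neg sr_1)
    finally show "- a \<in> G" using aT T unfolding G_def by (auto simp: sr_neg)
  qed
  moreover have "V \<subseteq> G" unfolding G_def using VT VD by (auto intro!: exI[of _ 0])
  moreover have "x \<in> G" unfolding G_def using x xy VD[of "x*y" 1] by (auto intro!: exI[of _ 1])
  ultimately have "G = T" using max_sr_eq[OF mx] x unfolding G_def by blast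
  then obtain m where "y * y ^ m \<in> D m" using y unfolding G_def by blast
  then obtain p where p: "\<forall>i. coeff p i \<in> V" "degree p \<le> m" "y ^ Suc m = poly p y"
    unfolding D_def by auto
  have "poly p y = (\<Sum>i<Suc m. coeff p i * y ^ i)"
  proof -
    have "poly p y = poly (\<Sum>i\<le>m. monom (coeff p i) i) y" using poly_as_sum_of_monoms'[OF p(2)] by simp
    also have "\<dots> = (\<Sum>i\<le>m. coeff p i * y ^ i)" by (simp add: poly_sum poly_monom)
    finally show ?thesis using lessThan_Suc_atMost by simp
  qed
  then have "integral_over V y"
    unfolding integral_over_def using p V
    by (intro exI[of _ "Suc m"] exI[of _ "\<lambda>i. - coeff p i"]) (auto simp: sr_neg sum_negf)
  then show ?thesis using ic y unfolding integrally_closed_in_def by blast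
qed

lemma valB:
  fixes V T :: "'a::comm_ring_1 set"
  assumes mx: "maximal_subring V T" and T: "is_subring T"
    and u: "u \<in> V" and s: "s \<in> T" "s \<notin> V" and su: "s * u \<in> V" and r: "r \<in> T"
  shows "\<exists>m. r * u ^ m \<in> V"
proof -
  have V: "is_subring V" and VT: "V \<subseteq> T"
    using mx unfolding maximal_subring_def by auto
  define G where "G = {z \<in> T. \<exists>m. z * u ^ m \<in> V}"
  have "is_subring G"
    unfolding is_subring_def
  proof (intro conjI ballI)
    show "1 \<in> G" unfolding G_def using T V by (auto simp: sr_1 intro!: exI[of _ 0])
  next
    fix a b assume a: "a \<in> G" and b: "b \<in> G"
    then obtain m k where m: "a * u ^ m \<in> V" and k: "b * u ^ k \<in> V" and abT: "a \<in> T" "b \<in> T"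
      unfolding G_def by blast
    have "(a + b) * u ^ (m + k) = (a * u ^ m) * u ^ k + (b * u ^ k) * u ^ m"
      by (simp add: algebra_simps power_add)
    also have "\<dots> \<in> V" using V m k u by (simp add: sr_add sr_mult sr_pow)
    finally have 1: "(a + b) * u ^ (m + k) \<in> V" .
    have "(a * b) * u ^ (m + k) = (a * u ^ m) * (b * u ^ k)"
      by (simp add: algebra_simps power_add)
    also have "\<dots> \<in> V" using V m k by (simp add: sr_mult)
    finally have 2: "(a * b) * u ^ (m + k) \<in> V" .
    show "a + b \<in> G" "a * b \<in> G" using 1 2 abT T unfolding G_def
      by (auto simp: sr_add sr_mult)
  next
    fix a assume a: "a \<in> G"
    then obtain m where m: "a * u ^ m \<in> V" and aT: "a \<in> T" unfolding G_def by blast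
    have "(-a) * u ^ m = - (a * u ^ m)" by simp
    also have "\<dots> \<in> V" using m V by (simp add: sr_neg)
    finally show "- a \<in> G" using aT T unfolding G_def by (auto simp: sr_neg)
  qed
  moreover have "V \<subseteq> G" unfolding G_def using VT by (auto intro!: exI[of _ 0])
  moreover have "s \<in> G" unfolding G_def using s su by (auto intro!: exI[of _ 1])
  moreover have "G \<subseteq> T" unfolding G_def by blast
  ultimately have "G = T" using max_sr_eq[OF mx] s by blast
  then show ?thesis using r unfolding G_def by blast
qed

lemma id_sub: "ideal_in I A \<Longrightarrow> I \<subseteq> A" unfolding ideal_in_def by blast
lemma id_0: "ideal_in I A \<Longrightarrow> 0 \<in> I" unfolding ideal_in_def by blast
lemma id_add: "ideal_in I A \<Longrightarrow> x \<in> I \<Longrightarrow> y \<in> I \<Longrightarrow> x + y \<in> I" unfolding ideal_in_def by blast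
lemma id_lmult: "ideal_in I A \<Longrightarrow> a \<in> A \<Longrightarrow> x \<in> I \<Longrightarrow> a * x \<in> I" unfolding ideal_in_def by blast
lemma id_rmult: "ideal_in I A \<Longrightarrow> a \<in> A \<Longrightarrow> x \<in> I \<Longrightarrow> x * a \<in> I"
  unfolding ideal_in_def by (metis mult.commute)
lemma id_neg: "ideal_in I A \<Longrightarrow> is_subring A \<Longrightarrow> x \<in> I \<Longrightarrow> - x \<in> I"
  by (metis id_lmult mult_minus1 sr_1 sr_neg)
lemma id_diff: "ideal_in I A \<Longrightarrow> is_subring A \<Longrightarrow> x \<in> I \<Longrightarrow> y \<in> I \<Longrightarrow> x - y \<in> I"
  by (metis diff_conv_add_uminus id_add id_neg)
lemma id_sum: "ideal_in I A \<Longrightarrow> (\<And>i. i \<in> S \<Longrightarrow> f i \<in> I) \<Longrightarrow> sum f S \<in> I"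
proof (induction S rule: infinite_finite_induct)
  case (infinite A) then show ?case by (simp add: id_0)
next
  case empty then show ?case by (simp add: id_0)
next
  case (insert x F) then show ?case by (simp add: id_add)
qed

lemma max_1: "maximal_ideal_in P R \<Longrightarrow> 1 \<notin> P"
  unfolding maximal_ideal_in_def ideal_in_def by (metis mult.right_neutral subsetI subset_antisym)

lemma max_unit:
  assumes P: "maximal_ideal_in P R" and R: "is_subring R" and c: "c \<in> R" "c \<notin> P"
  shows "\<exists>r\<in>R. \<exists>p\<in>P. 1 = p + c * r"
proof -
  have I: "ideal_in P R" using P unfolding maximal_ideal_in_def by blast
  define J where "J = {p + c * r | p r. p \<in> P \<and> r \<in> R}"
  have "ideal_in J R" unfolding ideal_in_def
  proof (intro conjI ballI)
    show "J \<subseteq> R" unfolding J_def using id_sub[OF I] R c by (auto intro!: sr_add sr_mult)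
    show "0 \<in> J" unfolding J_def using id_0[OF I] sr_0[OF R] by force
  next
    fix x y assume "x \<in> J" "y \<in> J"
    then obtain p r p' r' where "x = p + c * r" "y = p' + c * r'" "p \<in> P" "r \<in> R" "p' \<in> P" "r' \<in> R"
      unfolding J_def by blast
    then show "x + y \<in> J" unfolding J_def using id_add[OF I] sr_add[OF R]
      by (intro CollectI exI[of _ "p + p'"] exI[of _ "r + r'"]) (auto simp: algebra_simps)
  next
    fix a x assume "a \<in> R" "x \<in> J"
    then obtain p r where "x = p + c * r" "p \<in> P" "r \<in> R" unfolding J_def by blast
    then show "a * x \<in> J" unfolding J_def using id_lmult[OF I] sr_mult[OF R] \<open>a \<in> R\<close>
      by (intro CollectI exI[of _ "a * p"] exI[of _ "a * r"]) (auto simp: algebra_simps)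
  qed
  moreover have "P \<subseteq> J" unfolding J_def using sr_0[OF R] by force
  moreover have "c \<in> J" unfolding J_def using sr_1[OF R] id_0[OF I] by force
  ultimately have "J = R" using P c unfolding maximal_ideal_in_def by blast
  then have "1 \<in> J" using sr_1[OF R] by simp
  then show ?thesis unfolding J_def by auto
qed

lemma max_prime:
  assumes P: "maximal_ideal_in P R" and R: "is_subring R" and a: "a \<in> R" "a \<notin> P"
    and b: "b \<in> R" and ab: "a * b \<in> P"
  shows "b \<in> P"
proof -
  have I: "ideal_in P R" using P unfolding maximal_ideal_in_def by blast
  obtain r p where "r \<in> R" "p \<in> P" "1 = p + a * r" using max_unit[OF P R a] by blast
  then have "b = p * b + (a * b) * r" by (metis mult.commute mult.left_commute distrib_left mult.right_neutral)
  also have "\<dots> \<in> P" using id_add[OF I id_rmult[OF I b \<open>p \<in> P\<close>] id_rmult[OF I \<open>r \<in> R\<close> ab]] .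
  finally show ?thesis .
qed

lemma max_pow:
  assumes P: "maximal_ideal_in P R" and R: "is_subring R" and a: "a \<in> R" "a \<notin> P"
  shows "a ^ n \<notin> P"
proof (induction n)
  case 0 then show ?case using max_1[OF P] by simp
next
  case (Suc n) then show ?case using max_prime[OF P R a sr_pow[OF R a(1)]] by auto
qed

lemma lying_over:
  fixes R T :: "'a::comm_ring_1 set"
  assumes ie: "integral_extension R T" and P: "maximal_ideal_in P R"
  shows "\<exists>Q. maximal_ideal_in Q T \<and> P \<subseteq> Q \<and> Q \<inter> R \<subseteq> P"
proof -
  have R: "is_subring R" and T: "is_subring T" and RT: "R \<subseteq> T"
    and int: "\<And>x. x \<in> T \<Longrightarrow> integral_over R x"
    using ie unfolding integral_extension_def by auto
  have IP: "ideal_in P R" using P unfolding maximal_ideal_in_def by blast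
  define F where "F = {J. ideal_in J T \<and> J \<inter> R \<subseteq> P}"
  have "{0} \<in> F" unfolding F_def ideal_in_def using sr_0[OF T] id_0[OF IP] by auto
  then have Fne: "F \<noteq> {}" by blast
  have ch: "\<Union>C \<in> F" if "C \<noteq> {}" "subset.chain F C" for C
  proof -
    have CF: "C \<subseteq> F" and cc: "\<forall>X\<in>C. \<forall>Y\<in>C. X \<subseteq> Y \<or> Y \<subseteq> X"
      using that(2) unfolding subset_chain_def by auto
    have "ideal_in (\<Union>C) T" unfolding ideal_in_def
    proof (intro conjI ballI)
      show "\<Union>C \<subseteq> T" using CF unfolding F_def ideal_in_def by blast
      show "0 \<in> \<Union>C" using CF that(1) unfolding F_def ideal_in_def by blast
    next
      fix x y assume "x \<in> \<Union>C" "y \<in> \<Union>C"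
      then obtain X Y where XY: "X \<in> C" "Y \<in> C" "x \<in> X" "y \<in> Y" by blast
      then have "X \<subseteq> Y \<or> Y \<subseteq> X" using cc by blast
      then show "x + y \<in> \<Union>C" using XY CF unfolding F_def ideal_in_def by blast
    next
      fix a x assume "a \<in> T" "x \<in> \<Union>C"
      then show "a * x \<in> \<Union>C" using CF unfolding F_def ideal_in_def by blast
    qed
    moreover have "\<Union>C \<inter> R \<subseteq> P" using CF unfolding F_def by blast
    ultimately show ?thesis unfolding F_def by blast
  qed
  obtain Q where QF: "Q \<in> F" and Qmax: "\<forall>X\<in>F. Q \<subseteq> X \<longrightarrow> X = Q"
    using subset_Zorn_nonempty[OF Fne ch] by blast
  have IQ: "ideal_in Q T" and QR: "Q \<inter> R \<subseteq> P" using QF unfolding F_def by auto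
  have PQ: "P \<subseteq> Q"
  proof
    fix p assume pP: "p \<in> P"
    have pR: "p \<in> R" using id_sub[OF IP] pP by blast
    have pT: "p \<in> T" using pR RT by blast
    show "p \<in> Q"
    proof (rule ccontr)
      assume pQ: "p \<notin> Q"
      define J where "J = {q + p * t | q t. q \<in> Q \<and> t \<in> T}"
      have IJ: "ideal_in J T" unfolding ideal_in_def
      proof (intro conjI ballI)
        show "J \<subseteq> T" unfolding J_def using id_sub[OF IQ] T pT by (auto intro!: sr_add sr_mult)
        show "0 \<in> J" unfolding J_def using id_0[OF IQ] sr_0[OF T] by force
      next
        fix x y assume "x \<in> J" "y \<in> J"
        then obtain q r q' r' where "x = q + p * r" "y = q' + p * r'" "q \<in> Q" "r \<in> T" "q' \<in> Q" "r' \<in> T"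
          unfolding J_def by blast
        then show "x + y \<in> J" unfolding J_def using id_add[OF IQ] sr_add[OF T]
          by (intro CollectI exI[of _ "q + q'"] exI[of _ "r + r'"]) (auto simp: algebra_simps)
      next
        fix a x assume "a \<in> T" "x \<in> J"
        then obtain q r where "x = q + p * r" "q \<in> Q" "r \<in> T" unfolding J_def by blast
        then show "a * x \<in> J" unfolding J_def using id_lmult[OF IQ] sr_mult[OF T] \<open>a \<in> T\<close>
          by (intro CollectI exI[of _ "a * q"] exI[of _ "a * r"]) (auto simp: algebra_simps)
      qed
      have "Q \<subseteq> J" unfolding J_def using sr_0[OF T] by force
      moreover have "p \<in> J" unfolding J_def using sr_1[OF T] id_0[OF IQ] by force
      ultimately have "J \<notin> F" using Qmax pQ by blast
      then obtain s where sJ: "s \<in> J" and sR: "s \<in> R" and sP: "s \<notin> P"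
        using IJ unfolding F_def by blast
      then obtain q t where s: "s = q + p * t" and qQ: "q \<in> Q" and tT: "t \<in> T"
        unfolding J_def by blast
      have sT: "s \<in> T" using sR RT by blast
      obtain n c where c: "\<forall>i<n. c i \<in> R" and eq: "t ^ n + (\<Sum>i<n. c i * t ^ i) = 0"
        using int[OF tT] unfolding integral_over_def by blast
      have ptT: "p * t \<in> T" using pT tT T by (simp add: sr_mult)
      have pow: "s ^ k - (p * t) ^ k \<in> Q" for k
      proof (induction k)
        case 0 then show ?case using id_0[OF IQ] by simp
      next
        case (Suc k)
        have "s ^ Suc k - (p * t) ^ Suc k = s * (s ^ k - (p * t) ^ k) + (p * t) ^ k * q"
          using s by (simp add: algebra_simps)
        also have "\<dots> \<in> Q"
          using Suc qQ by (intro id_add[OF IQ] id_lmult[OF IQ] id_rmult[OF IQ] sT sr_pow[OF T ptT]) auto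
        finally show ?case .
      qed
      define E where "E = s ^ n + (\<Sum>i<n. c i * p ^ (n - i) * s ^ i)"
      have "(p * t) ^ n + (\<Sum>i<n. c i * p ^ (n - i) * (p * t) ^ i) = p ^ n * (t ^ n + (\<Sum>i<n. c i * t ^ i))"
      proof -
        have "c i * p ^ (n - i) * (p * t) ^ i = p ^ n * (c i * t ^ i)" if "i < n" for i
        proof -
          have "p ^ n = p ^ (n - i) * p ^ i" using that by (simp flip: power_add)
          then show ?thesis by (simp add: power_mult_distrib algebra_simps)
        qed
        then show ?thesis by (simp add: power_mult_distrib sum_distrib_left distrib_left)
      qed
      then have zero: "(p * t) ^ n + (\<Sum>i<n. c i * p ^ (n - i) * (p * t) ^ i) = 0" using eq by simp
      have "E = E - ((p * t) ^ n + (\<Sum>i<n. c i * p ^ (n - i) * (p * t) ^ i))" using zero by simp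
      also have "\<dots> = (s ^ n - (p * t) ^ n) + (\<Sum>i<n. (c i * p ^ (n - i)) * (s ^ i - (p * t) ^ i))"
        unfolding E_def by (simp add: algebra_simps sum_subtractf)
      also have "\<dots> \<in> Q"
      proof (intro id_add[OF IQ] pow id_sum[OF IQ])
        fix i assume "i \<in> {..<n}"
        then have "c i * p ^ (n - i) \<in> T" using c pT RT T by (auto intro!: sr_mult sr_pow)
        then show "c i * p ^ (n - i) * (s ^ i - (p * t) ^ i) \<in> Q" using pow by (intro id_lmult[OF IQ])
      qed
      finally have EQ: "E \<in> Q" .
      have sumP: "(\<Sum>i<n. c i * p ^ (n - i) * s ^ i) \<in> P"
      proof (intro id_sum[OF IP])
        fix i assume i: "i \<in> {..<n}"
        then have "p ^ (n - i) = p * p ^ (n - i - 1)" by (metis Suc_diff_Suc diff_Suc_1 lessThan_iff power_Suc)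
        then have "c i * p ^ (n - i) * s ^ i = (c i * p ^ (n - i - 1) * s ^ i) * p" by (simp add: algebra_simps)
        also have "\<dots> \<in> P" using i c pP pR sR
          by (intro id_lmult[OF IP] id_rmult[OF IP]) (auto intro!: sr_mult[OF R] sr_pow[OF R] simp: mult.commute)
        finally show "c i * p ^ (n - i) * s ^ i \<in> P" .
      qed
      have ER: "E \<in> R" unfolding E_def using sR pR c
        by (intro sr_add[OF R] sr_pow[OF R] sr_sum[OF R] sr_mult[OF R]) auto
      have "E \<in> P" using EQ ER QR by blast
      then have "E - (\<Sum>i<n. c i * p ^ (n - i) * s ^ i) \<in> P" using sumP by (intro id_diff[OF IP R])
      then have "s ^ n \<in> P" unfolding E_def by simp
      then show False using max_pow[OF P R sR sP] by blast
    qed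
  qed
  have "maximal_ideal_in Q T" unfolding maximal_ideal_in_def
  proof (intro conjI allI impI)
    show "ideal_in Q T" by (rule IQ)
    show "Q \<noteq> T" using QR max_1[OF P] sr_1[OF R] sr_1[OF T] by blast
  next
    fix J assume "ideal_in J T \<and> Q \<subseteq> J"
    then have IJ: "ideal_in J T" and QJ: "Q \<subseteq> J" by auto
    show "J = Q \<or> J = T"
    proof (cases "J \<in> F")
      case True then show ?thesis using Qmax QJ by blast
    next
      case False
      then obtain r where rJ: "r \<in> J" and rR: "r \<in> R" and rP: "r \<notin> P" using IJ unfolding F_def by blast
      obtain r' p' where "r' \<in> R" "p' \<in> P" "1 = p' + r * r'" using max_unit[OF P R rR rP] by blast
      then have "1 \<in> J" using PQ QJ RT rJ by (metis id_add[OF IJ] id_rmult[OF IJ] subsetD)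
      then have "T \<subseteq> J" using id_lmult[OF IJ] by (metis mult.right_neutral subsetI)
      then show ?thesis using id_sub[OF IJ] by blast
    qed
  qed
  then show ?thesis using PQ QR by blast
qed

lemma integral_mono: "S \<subseteq> S' \<Longrightarrow> integral_over S x \<Longrightarrow> integral_over S' x"
  unfolding integral_over_def by blast

theorem theorem3p8:
  fixes R T :: "'a::comm_ring_1 set"
  assumes "integral_extension R T"
    and "\<forall>Q. maximal_ideal_in Q T \<longrightarrow>
           (\<exists>V. maximal_subring V T \<and> integrally_closed_in V T \<and> conductor V T = Q)"
  shows "\<forall>P. maximal_ideal_in P R \<longrightarrow>
           (\<exists>W. maximal_subring W R \<and> integrally_closed_in W R \<and> conductor W R = P)"
proof (intro allI impI)
  fix P assume P: "maximal_ideal_in P R"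
  have R: "is_subring R" and T: "is_subring T" and RT: "R \<subseteq> T"
    and int: "\<And>x. x \<in> T \<Longrightarrow> integral_over R x"
    using assms(1) unfolding integral_extension_def by auto
  have IP: "ideal_in P R" using P unfolding maximal_ideal_in_def by blast
  obtain Q where Q: "maximal_ideal_in Q T" and PQ: "P \<subseteq> Q" and QR: "Q \<inter> R \<subseteq> P"
    using lying_over[OF assms(1) P] by blast
  have IQ: "ideal_in Q T" using Q unfolding maximal_ideal_in_def by blast
  obtain V where mx: "maximal_subring V T" and ic: "integrally_closed_in V T" and cV: "conductor V T = Q"
    using assms(2) Q by blast
  have V: "is_subring V" and VT: "V \<subseteq> T" "V \<noteq> T" using mx unfolding maximal_subring_def by auto
  have QV: "Q \<subseteq> V" using cV sr_1[OF T] unfolding conductor_def by force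
  define W where "W = V \<inter> R"
  have Wsr: "is_subring W" using V R unfolding W_def is_subring_def by auto
  have PW: "P \<subseteq> W" using PQ QV id_sub[OF IP] unfolding W_def by blast
  have WR: "W \<noteq> R"
  proof
    assume "W = R"
    then have "R \<subseteq> V" unfolding W_def by blast
    then have "T \<subseteq> V" using int ic integral_mono unfolding integrally_closed_in_def by blast
    then show False using VT by blast
  qed
  have "maximal_subring W R" unfolding maximal_subring_def
  proof (intro conjI allI impI)
    show "is_subring W" by (rule Wsr)
    show "W \<subset> R" using WR unfolding W_def by blast
  next
    fix S assume "is_subring S \<and> W \<subseteq> S \<and> S \<subset> R"
    then have S: "is_subring S" and WS: "W \<subseteq> S" and SR: "S \<subset> R" by auto
    show "S = W"
    proof (rule ccontr)
      assume "S \<noteq> W"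
      then obtain s where sS: "s \<in> S" and sW: "s \<notin> W" using WS by blast
      have sR: "s \<in> R" using sS SR by blast
      have sV: "s \<notin> V" using sW sR unfolding W_def by blast
      have sT: "s \<in> T" using sR RT by blast
      have sP: "s \<notin> P" using sW PW by blast
      obtain u p where uR: "u \<in> R" and pP: "p \<in> P" and up: "1 = p + s * u"
        using max_unit[OF P R sR sP] by blast
      have uT: "u \<in> T" using uR RT by blast
      have pV: "p \<in> V" using pP PW unfolding W_def by blast
      have su: "s * u = 1 - p" using up by (simp add: algebra_simps)
      have suV: "s * u \<in> V" using su pV V by (simp add: sr_diff sr_1)
      have uV: "u \<in> V" using valA[OF mx ic T sT sV uT suV] .
      have "R \<subseteq> S"
      proof
        fix r assume rR: "r \<in> R"
        obtain m where m: "r * u ^ m \<in> V" using valB[OF mx T uV sT sV suV] rR RT by blast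
        have "r * u ^ m \<in> W" using m rR uR R unfolding W_def by (auto intro: sr_mult sr_pow)
        then have 1: "r * u ^ m \<in> S" using WS by blast
        have pw: "1 - (s * u) ^ k \<in> P" for k
        proof (induction k)
          case 0 then show ?case using id_0[OF IP] by simp
        next
          case (Suc k)
          have "1 - (s * u) ^ Suc k = (1 - (s * u) ^ k) + (s * u) ^ k * (1 - s * u)"
            by (simp add: algebra_simps)
          also have "1 - s * u = p" using su by simp
          finally have "1 - (s * u) ^ Suc k = (1 - (s * u) ^ k) + (s * u) ^ k * p" .
          also have "\<dots> \<in> P" using Suc pP sR uR
            by (intro id_add[OF IP] id_lmult[OF IP] sr_pow[OF R] sr_mult[OF R]) auto
          finally show ?case .
        qed
        have "r = r * u ^ m * s ^ m + r * (1 - (s * u) ^ m)" by (simp add: algebra_simps power_mult_distrib)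
        also have "\<dots> \<in> S"
        proof (rule sr_add[OF S])
          show "r * u ^ m * s ^ m \<in> S" using sr_mult[OF S 1 sr_pow[OF S sS]] .
          have "r * (1 - (s * u) ^ m) \<in> P" using pw rR by (intro id_lmult[OF IP])
          then show "r * (1 - (s * u) ^ m) \<in> S" using PW WS by blast
        qed
        finally show "r \<in> S" .
      qed
      then show False using SR by blast
    qed
  qed
  moreover have "integrally_closed_in W R"
    unfolding integrally_closed_in_def
  proof (intro ballI impI)
    fix x assume "x \<in> R" "integral_over W x"
    then have "integral_over V x" "x \<in> T" using integral_mono[of W V] RT unfolding W_def by auto
    then show "x \<in> W" using ic \<open>x \<in> R\<close> unfolding integrally_closed_in_def W_def by blast
  qed
  moreover have "conductor W R = P"
  proof
    show "P \<subseteq> conductor W R"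
    proof
      fix p assume pP: "p \<in> P"
      have "a * p \<in> W" if "a \<in> R" for a
      proof -
        have "a * p \<in> P" using pP that by (intro id_lmult[OF IP])
        then show ?thesis using PW by blast
      qed
      then show "p \<in> conductor W R" using pP id_sub[OF IP] unfolding conductor_def by blast
    qed
  next
    show "conductor W R \<subseteq> P"
    proof
      fix c assume "c \<in> conductor W R"
      then have cR: "c \<in> R" and cW: "\<forall>a\<in>R. a * c \<in> W" unfolding conductor_def by auto
      show "c \<in> P"
      proof (rule ccontr)
        assume cP: "c \<notin> P"
        obtain r p where rR: "r \<in> R" and pP: "p \<in> P" and rp: "1 = p + c * r"
          using max_unit[OF P R cR cP] by blast
        have "R \<subseteq> W"
        proof
          fix a assume aR: "a \<in> R"
          have "a = a * p + (a * r) * c" using rp by (metis mult.commute mult.left_commute distrib_left mult.right_neutral)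
          also have "\<dots> \<in> W" using aR rR pP PW cW id_lmult[OF IP]
            by (intro sr_add[OF Wsr]) (auto intro: sr_mult[OF R])
          finally show "a \<in> W" .
        qed
        then show False using WR unfolding W_def by blast
      qed
    qed
  qed
  ultimately show "\<exists>W. maximal_subring W R \<and> integrally_closed_in W R \<and> conductor W R = P" by blast
qed

end
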